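(* Let $S,T$ be left semi-braces whose associated maps $r_S$ and $r_T$ are solutions. Let $\sigma:T\to\mathrm{Aut}(S)$ be a homomorphism from $(T,\cdot)$ into the automorphism group of $(S,+,\cdot)$ (write ${}^ua=\sigma(u)(a)$), and $\delta:S\to\mathrm{End}(T)$ an anti-homomorphism from $(S,+)$ into the endomorphism semigroup of $(T,+)$ (write $u^a=\delta(a)(u)$) with $(uv)^{\lambda_a({}^ub)}+u((u^{-1})^b+w)=u(v^b+w)$ for all $a,b\in S$, $u,v,w\in T$; let $B$ be the double semidirect product $S\times T$ with $(a,u)+(b,v)=(a+b,u^b+v)$, $(a,u)(b,v)=(a\,{}^ub,uv)$. If (1) $(u^{1})^a=u^a$ and (2) $1^a+u=1+u$ for all $a\in S$ and $u\in T$ (where in (1) $1$ is the identity of $(S,\cdot)$ and in (2) $1$ is the identity of $(T,\cdot)$), then the map $r_B$ associated to $B$ is a solution.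
   Context: A left semi-brace is a triple $(S,+,\cdot)$ such that $(S,+)$ is a semigroup, $(S,\cdot)$ is a group with identity $1$, and $a(b+c)=ab+a(a^{-1}+c)$ for all $a,b,c$. Set $\lambda_a(b)=a(a^{-1}+b)$, $\rho_b(a)=(a^{-1}+b)^{-1}b$; the map associated to $X$ is $r_X(x,y)=(\lambda_x(y),\rho_y(x))$. A solution is a map $r:X\times X\to X\times X$ with $(r\times\mathrm{id})(\mathrm{id}\times r)(r\times\mathrm{id})=(\mathrm{id}\times r)(r\times\mathrm{id})(\mathrm{id}\times r)$. An automorphism of $(S,+,\cdot)$ is a bijection preserving both operations. That $\delta$ is an anti-homomorphism from $(S,+)$ means $u^{a+b}=(u^a)^b$. *)

theory Defs
  imports Main
begin

(* A structure is given by operations on a whole type (carrier = UNIV). *)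

definition is_semigroup :: "('a \<Rightarrow> 'a \<Rightarrow> 'a) \<Rightarrow> bool" where
  "is_semigroup add \<longleftrightarrow> (\<forall>a b c. add (add a b) c = add a (add b c))"

definition is_group :: "('a \<Rightarrow> 'a \<Rightarrow> 'a) \<Rightarrow> 'a \<Rightarrow> bool" where
  "is_group mult one \<longleftrightarrow>
     (\<forall>a b c. mult (mult a b) c = mult a (mult b c)) \<and>
     (\<forall>a. mult one a = a \<and> mult a one = a) \<and>
     (\<forall>a. \<exists>b. mult a b = one \<and> mult b a = one)"

definition ginv :: "('a \<Rightarrow> 'a \<Rightarrow> 'a) \<Rightarrow> 'a \<Rightarrow> 'a \<Rightarrow> 'a" where
  "ginv mult one a = (THE b. mult a b = one \<and> mult b a = one)"

definition left_semi_brace :: "('a \<Rightarrow> 'a \<Rightarrow> 'a) \<Rightarrow> ('a \<Rightarrow> 'a \<Rightarrow> 'a) \<Rightarrow> 'a \<Rightarrow> bool" where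
  "left_semi_brace add mult one \<longleftrightarrow>
     is_semigroup add \<and> is_group mult one \<and>
     (\<forall>a b c. mult a (add b c) = add (mult a b) (mult a (add (ginv mult one a) c)))"

definition lam :: "('a \<Rightarrow> 'a \<Rightarrow> 'a) \<Rightarrow> ('a \<Rightarrow> 'a \<Rightarrow> 'a) \<Rightarrow> 'a \<Rightarrow> 'a \<Rightarrow> 'a \<Rightarrow> 'a" where
  "lam add mult one a b = mult a (add (ginv mult one a) b)"

definition rho :: "('a \<Rightarrow> 'a \<Rightarrow> 'a) \<Rightarrow> ('a \<Rightarrow> 'a \<Rightarrow> 'a) \<Rightarrow> 'a \<Rightarrow> 'a \<Rightarrow> 'a \<Rightarrow> 'a" where
  "rho add mult one b a = mult (ginv mult one (add (ginv mult one a) b)) b"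

definition assoc_map :: "('a \<Rightarrow> 'a \<Rightarrow> 'a) \<Rightarrow> ('a \<Rightarrow> 'a \<Rightarrow> 'a) \<Rightarrow> 'a \<Rightarrow> 'a \<times> 'a \<Rightarrow> 'a \<times> 'a" where
  "assoc_map add mult one = (\<lambda>(x, y). (lam add mult one x y, rho add mult one y x))"

definition r12 :: "('a \<times> 'a \<Rightarrow> 'a \<times> 'a) \<Rightarrow> 'a \<times> 'a \<times> 'a \<Rightarrow> 'a \<times> 'a \<times> 'a" where
  "r12 r = (\<lambda>(x, y, z). let (p, q) = r (x, y) in (p, q, z))"

definition r23 :: "('a \<times> 'a \<Rightarrow> 'a \<times> 'a) \<Rightarrow> 'a \<times> 'a \<times> 'a \<Rightarrow> 'a \<times> 'a \<times> 'a" where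
  "r23 r = (\<lambda>(x, y, z). let (p, q) = r (y, z) in (x, p, q))"

definition is_solution :: "('a \<times> 'a \<Rightarrow> 'a \<times> 'a) \<Rightarrow> bool" where
  "is_solution r \<longleftrightarrow> r12 r \<circ> r23 r \<circ> r12 r = r23 r \<circ> r12 r \<circ> r23 r"

definition dsp_add :: "('a \<Rightarrow> 'a \<Rightarrow> 'a) \<Rightarrow> ('b \<Rightarrow> 'b \<Rightarrow> 'b) \<Rightarrow> ('a \<Rightarrow> 'b \<Rightarrow> 'b)
    \<Rightarrow> 'a \<times> 'b \<Rightarrow> 'a \<times> 'b \<Rightarrow> 'a \<times> 'b" where
  "dsp_add addS addT \<delta> = (\<lambda>(a, u) (b, v). (addS a b, addT (\<delta> b u) v))"

definition dsp_mult :: "('a \<Rightarrow> 'a \<Rightarrow> 'a) \<Rightarrow> ('b \<Rightarrow> 'b \<Rightarrow> 'b) \<Rightarrow> ('b \<Rightarrow> 'a \<Rightarrow> 'a)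
    \<Rightarrow> 'a \<times> 'b \<Rightarrow> 'a \<times> 'b \<Rightarrow> 'a \<times> 'b" where
  "dsp_mult multS multT \<sigma> = (\<lambda>(a, u) (b, v). (multS a (\<sigma> u b), multT u v))"

end

theory Submission
  imports Defs
begin
locale sb =
  fixes pl :: "'a \<Rightarrow> 'a \<Rightarrow> 'a" (infixl "\<oplus>" 65)
    and mu :: "'a \<Rightarrow> 'a \<Rightarrow> 'a" (infixl "\<cdot>" 70)
    and e :: 'a and iv :: "'a \<Rightarrow> 'a" and lm :: "'a \<Rightarrow> 'a \<Rightarrow> 'a"
  assumes padd: "(a \<oplus> b) \<oplus> c = a \<oplus> (b \<oplus> c)"
    and massoc: "(a \<cdot> b) \<cdot> c = a \<cdot> (b \<cdot> c)"
    and lid: "e \<cdot> a = a" and rid: "a \<cdot> e = a"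
    and linv: "iv a \<cdot> a = e" and rinv: "a \<cdot> iv a = e"
    and ax: "a \<cdot> (b \<oplus> c) = (a \<cdot> b) \<oplus> lm a c"
    and lm_def: "lm a b = a \<cdot> (iv a \<oplus> b)"
    and lm_add: "lm a (b \<oplus> c) = lm a b \<oplus> lm a c"
    and lm_mult: "lm (a \<cdot> b) c = lm a (lm b c)"
    and F1: "x \<oplus> (e \<oplus> a) = x \<oplus> a"
    and F2: "a \<oplus> b = a \<cdot> lm (iv a) b"
    and F3: "lm e x = e \<oplus> x"
    and F4: "e \<oplus> lm a b = lm a b"
begin
lemma I3_of_C:
  assumes C: "\<And>y z. (e \<oplus> y) \<oplus> lm y z = lm y z \<oplus> lm (lm y z) (iv (lm y z) \<cdot> (y \<cdot> z))"
  shows "e \<oplus> (y \<cdot> (e \<oplus> z)) = e \<oplus> (y \<cdot> z)"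
proof -
  have f1: "\<forall>a aa. iv a \<cdot> (a \<cdot> aa) = e \<cdot> aa"
    using linv massoc by fastforce
  then have f2: "\<forall>a. iv (iv a) = e \<cdot> a"
    by (metis (no_types) rid)
  have f3: "iv e = e"
    by (metis (full_types) linv rid)
  have f4: "\<forall>a aa. a \<cdot> (e \<cdot> aa) = a \<cdot> aa"
    by (metis (full_types) massoc rid)
  have f5: "\<forall>a aa. a \<oplus> lm a aa = a \<cdot> (e \<oplus> aa)"
    by (simp add: ax rid)
  have f6: "\<forall>a aa. aa \<cdot> (a \<cdot> iv a) = aa"
    using f2 by (metis (no_types) linv massoc rid)
  have f7: "\<forall>a aa. lm (e \<cdot> a) aa = lm a aa"
    using F3 F4 lm_mult by force
  have f8: "\<forall>a aa. lm a aa \<cdot> (e \<oplus> iv (lm a aa) \<cdot> (a \<cdot> aa)) = e \<oplus> a \<cdot> (e \<oplus> aa)"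
    using f5 C padd by auto
  then have f9: "e \<oplus> e = e"
    using f6 f3 f2 f1 by (metis F2 F3 F4 lm_def lm_mult linv massoc rid)
  then have f10: "\<forall>a. a \<cdot> iv a = e"
    using f7 f6 f5 by (metis F3 lm_def lm_mult rid)
  then have f11: "\<forall>a. e \<cdot> a = a"
    using f4 f2 by (metis massoc rid)
  then have f12: "\<forall>a aa. a \<cdot> (iv a \<cdot> aa) = aa"
    using f10 by (metis massoc)
  then have f13: "\<forall>a aa ab. lm a (aa \<oplus> lm (iv a) ab) = lm a aa \<oplus> ab"
    using f11 f2 by (smt (verit) F2 ax lm_def padd)
  have f14: "\<forall>a aa. lm (iv a) aa = iv a \<cdot> (a \<oplus> aa)"
    by (simp add: F4 ax linv)
  have f15: "\<forall>a. lm a (iv a) \<oplus> e = lm a (iv a)"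
    using f13 f9 f5 by (metis (no_types) rid)
  have f16: "\<forall>a aa. iv a \<cdot> (a \<cdot> aa) = aa"
    using f11 f1 by presburger
  have f17: "\<forall>a. iv (iv a) = a"
    using f11 f2 by presburger
  have f18: "\<forall>a aa. a \<cdot> iv (aa \<cdot> a) = iv aa"
    using f16 by (metis massoc rid)
  have f19: "\<forall>a. lm (lm a (iv a)) e = e"
    using f17 f15 f14 f10 f9 f5 by (metis linv rid)
  have f20: "\<forall>a aa. iv (a \<cdot> aa) \<cdot> a = iv aa"
    using f18 f11 f2 by metis
  have f21: "\<forall>a aa. lm a e \<oplus> aa = e \<oplus> aa"
    using f13 f10 by (metis F3 lm_mult rid)
  have "\<forall>a aa. lm (lm (iv (a \<oplus> aa)) aa) e = e"
    using f20 f19 f17 f10 by (metis (no_types) F2 lm_mult massoc rid)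
  then have "\<forall>a. lm (iv (a \<oplus> e)) e = e"
    using f21 f9 f5 by (metis F4 rid)
  then have f22: "\<forall>a. lm (a \<oplus> e) e = e"
    using f17 f9 f5 by (metis rid)
  have f23: "\<forall>a. e \<oplus> iv (e \<oplus> a) \<cdot> a = e"
    using f16 f8 f6 f4 f2 f1 by (metis (no_types) F1 F3)
  then have f24: "\<forall>a aa. lm aa (iv (e \<oplus> a) \<cdot> a) = lm aa e"
    using f14 f3 by (metis lm_mult rid)
  have f25: "\<forall>a aa. iv (iv aa \<cdot> a) = iv a \<cdot> aa"
    using f20 f12 by metis
  have f26: "\<forall>a aa. lm (iv aa \<cdot> (a \<oplus> aa)) e = e"
    using f22 f17 f15 by (metis ax padd)
  then have f27: "\<forall>a. e \<oplus> iv a \<cdot> (e \<oplus> a) = e"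
    using f25 f24 f23 f9 f8 f3 by (metis linv rid)
  then have f28: "\<forall>a aa. lm aa (iv a \<cdot> (e \<oplus> a)) = lm aa e"
    using f14 f3 by (metis lm_mult rid)
  then have f29: "\<forall>a. lm a (iv a) \<oplus> a = lm a e"
    using f17 f13 f11 f5 f2 by metis
  have f30: "\<forall>a aa. lm a (iv a) \<oplus> (a \<oplus> aa) = e \<oplus> aa"
    using f28 f21 f13 f5 by (metis (no_types) padd)
  have f31: "\<forall>a aa ab. a \<cdot> (aa \<oplus> lm (iv a) ab) = a \<cdot> aa \<oplus> ab"
    using f12 f11 f2 by (metis ax)
  have f32: "\<forall>a aa. iv aa \<cdot> iv a = iv (a \<cdot> aa)"
    using f18 f16 by (metis (no_types))
  have f33: "\<forall>a aa. aa \<oplus> lm (a \<oplus> aa) e = aa"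
    using f26 F2 lm_mult rid by force
  have f34: "\<forall>a aa. iv a \<cdot> (aa \<oplus> a) \<oplus> iv a = iv a \<cdot> (aa \<oplus> e)"
    using f29 f17 by (metis (no_types) ax padd)
  have f35: "\<forall>a aa. iv a \<cdot> (e \<oplus> a) \<oplus> (iv a \<oplus> aa) = iv a \<oplus> aa"
    using f30 f17 f5 by (metis F1 padd)
  have "\<forall>a aa. iv aa \<cdot> (a \<oplus> aa) \<oplus> e = iv aa \<cdot> (a \<oplus> aa)"
    using f17 f15 by (metis ax padd)
  then have f36: "\<forall>a aa. lm aa a \<cdot> (e \<oplus> iv (iv aa \<oplus> a)) = e \<oplus> aa"
    using f35 f34 f32 f17 f16 by (metis lm_def linv massoc)
  have f37: "\<forall>a aa. lm (iv (aa \<cdot> a)) aa \<cdot> (e \<oplus> iv (a \<oplus> lm (iv aa) aa)) = e \<oplus> iv (aa \<cdot> a) \<cdot> (e \<oplus> aa)"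
    using f32 f20 f18 f8 f5 by (metis (no_types) F4 lm_mult)
  have f38: "\<forall>a aa ab. lm (iv ((a \<oplus> aa) \<cdot> ab) \<cdot> aa) e = lm (iv ab) e"
    using f33 f21 f20 by (metis F4 lm_mult)
  have f39: "\<forall>a aa. lm (iv (a \<oplus> aa) \<cdot> aa) e = e"
    using f33 f21 by (metis F4 lm_mult linv)
  have f40: "\<forall>a aa. lm a e \<cdot> (e \<oplus> aa) = e \<oplus> lm a e \<cdot> aa"
    using f36 f31 f21 f20 by (metis (no_types) F2 F4 lm_def massoc)
  have f41: "\<forall>a aa. lm (iv aa) a \<cdot> iv (aa \<oplus> a) = iv aa"
    using f18 by (simp add: F2)
  have "\<forall>a aa. aa \<oplus> iv a \<cdot> (e \<oplus> a) = aa \<oplus> e"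
    using f31 f27 f16 f14 f11 f3 by (metis (no_types) rid)
  then have "\<forall>a aa. e \<oplus> iv ((e \<oplus> a) \<cdot> aa) \<cdot> a = e \<oplus> iv aa"
    using f41 f40 f39 f38 f37 f28 f25 by (metis massoc rid)
  then show ?thesis
    using f18 f11 f2 by (metis (no_types))
qed
end

lemma ginv_unique:
  assumes G: "is_group m i" and h: "m a b = i" "m b a = i"
  shows "ginv m i a = b"
proof -
  have uq: "c = b" if "m a c = i \<and> m c a = i" for c
  proof -
    have "c = m c (m a b)" using G h by (simp add: is_group_def)
    also have "\<dots> = m (m c a) b" using G by (simp add: is_group_def)
    also have "\<dots> = b" using G that by (simp add: is_group_def)
    finally show ?thesis .
  qed
  show ?thesis unfolding ginv_def
    by (rule the_equality) (use h in simp, use uq in blast)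
qed

lemma ginv_prop:
  assumes G: "is_group m i"
  shows "m a (ginv m i a) = i" "m (ginv m i a) a = i"
proof -
  from G have "\<exists>b. m a b = i \<and> m b a = i" by (simp add: is_group_def)
  then obtain b where b: "m a b = i" "m b a = i" by blast
  then have "ginv m i a = b" using ginv_unique[OF G] by blast
  then show "m a (ginv m i a) = i" "m (ginv m i a) a = i" using b by auto
qed

locale lsb =
  fixes add :: "'a \<Rightarrow> 'a \<Rightarrow> 'a" (infixl "\<oplus>" 65)
    and mult :: "'a \<Rightarrow> 'a \<Rightarrow> 'a" (infixl "\<cdot>" 70)
    and one :: 'a
  assumes LSB: "left_semi_brace add mult one"
begin

abbreviation iv where "iv \<equiv> ginv mult one"
abbreviation L where "L \<equiv> lam add mult one"
abbreviation R where "R \<equiv> rho add mult one"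

lemma grp: "is_group mult one" using LSB by (simp add: left_semi_brace_def)
lemma padd: "(a \<oplus> b) \<oplus> c = a \<oplus> (b \<oplus> c)" using LSB by (simp add: left_semi_brace_def is_semigroup_def)
lemma massoc: "(a \<cdot> b) \<cdot> c = a \<cdot> (b \<cdot> c)" using grp by (simp add: is_group_def)
lemma lid: "one \<cdot> a = a" using grp by (simp add: is_group_def)
lemma rid: "a \<cdot> one = a" using grp by (simp add: is_group_def)
lemma linv: "iv a \<cdot> a = one" using ginv_prop[OF grp] by simp
lemma rinv: "a \<cdot> iv a = one" using ginv_prop[OF grp] by simp
lemma ax: "a \<cdot> (b \<oplus> c) = (a \<cdot> b) \<oplus> L a c"
  using LSB unfolding left_semi_brace_def lam_def by blast
lemma Ldef: "L a b = a \<cdot> (iv a \<oplus> b)" by (simp add: lam_def)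
lemma m2: "a \<cdot> (iv a \<cdot> b) = b" by (metis massoc rinv lid)
lemma m3: "iv a \<cdot> (a \<cdot> b) = b" by (metis massoc linv lid)
lemma ivuniq: "a \<cdot> b = one \<Longrightarrow> iv a = b"
  by (metis m3 rid)
lemma iviv: "iv (iv a) = a" using ivuniq linv by blast
lemma ivone: "iv one = one" using ivuniq lid by blast
lemma ivmult: "iv (a \<cdot> b) = iv b \<cdot> iv a"
  by (rule ivuniq) (metis massoc m2 rinv)
lemma lcancel: "a \<cdot> b = a \<cdot> c \<Longrightarrow> b = c" by (metis m3)
lemma L_add: "L a (b \<oplus> c) = L a b \<oplus> L a c"
proof -
  have "L a (b \<oplus> c) = a \<cdot> ((iv a \<oplus> b) \<oplus> c)" by (simp add: Ldef padd)
  also have "\<dots> = a \<cdot> (iv a \<oplus> b) \<oplus> L a c" by (rule ax)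
  finally show ?thesis by (simp add: Ldef)
qed
lemma L_mult: "L (a \<cdot> b) c = L a (L b c)"
proof -
  have 1: "b \<cdot> (iv b \<cdot> iv a \<oplus> c) = iv a \<oplus> L b c" using ax[of b "iv b \<cdot> iv a" c] by (simp add: m2)
  have "L (a \<cdot> b) c = a \<cdot> (b \<cdot> (iv b \<cdot> iv a \<oplus> c))" by (simp add: Ldef ivmult massoc)
  also have "\<dots> = L a (L b c)" by (simp add: 1 Ldef)
  finally show ?thesis .
qed
lemma F2: "a \<oplus> b = a \<cdot> L (iv a) b"
  unfolding Ldef iviv m2 ..
lemma F3: "L one x = one \<oplus> x"
  unfolding Ldef ivone lid ..
lemma F4: "one \<oplus> L a b = L a b"
proof -
  have "one \<oplus> L a b = L one (L a b)" by (simp add: F3)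
  also have "\<dots> = L a b" by (simp add: L_mult[symmetric] lid)
  finally show ?thesis .
qed
lemma F1: "x \<oplus> (one \<oplus> a) = x \<oplus> a"
proof -
  have "x \<oplus> (one \<oplus> a) = x \<cdot> L (iv x) (L one a)" by (simp add: F2 F3)
  also have "\<dots> = x \<oplus> a" by (simp add: L_mult[symmetric] rid F2)
  finally show ?thesis .
qed

sublocale sb add mult one iv L
  by unfold_locales (fact padd massoc lid rid linv rinv ax Ldef L_add L_mult F1 F2 F3 F4)+

lemma Rdef: "R b a = iv (iv a \<oplus> b) \<cdot> b" by (simp add: rho_def)
lemma prodLR: "L a b \<cdot> R b a = a \<cdot> b"
  unfolding Ldef Rdef by (metis massoc m2 rinv lid)
lemma ivR: "iv (R b a) = iv b \<cdot> (iv a \<oplus> b)"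
  unfolding Rdef ivmult iviv ..
lemma Rw: "R z y = iv (L y z) \<cdot> (y \<cdot> z)"
  by (metis prodLR m3)

lemma K: "iv (R z (R y x)) = iv (y \<cdot> z) \<cdot> (iv x \<oplus> (y \<oplus> L y z))"
proof -
  have "iv y \<cdot> ((iv x \<oplus> y) \<oplus> L y z) = (iv y \<cdot> (iv x \<oplus> y)) \<oplus> z"
    by (simp add: ax L_mult[symmetric] linv F3 F1)
  then show ?thesis
    by (simp add: ivR ivmult massoc padd)
qed

definition "Ccond \<longleftrightarrow> (\<forall>y z. (one \<oplus> y) \<oplus> L y z = L y z \<oplus> L (L y z) (iv (L y z) \<cdot> (y \<cdot> z)))"

lemma comps:
  "(r12 (assoc_map add mult one) \<circ> r23 (assoc_map add mult one) \<circ> r12 (assoc_map add mult one)) (x, y, z)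
    = (L (L x y) (L (R y x) z), R (L (R y x) z) (L x y), R z (R y x))"
  "(r23 (assoc_map add mult one) \<circ> r12 (assoc_map add mult one) \<circ> r23 (assoc_map add mult one)) (x, y, z)
    = (L x (L y z), L (R (L y z) x) (R z y), R (R z y) (R (L y z) x))"
  by (simp_all add: r12_def r23_def assoc_map_def)

lemma C_of_sol:
  assumes "is_solution (assoc_map add mult one)"
  shows Ccond
  unfolding Ccond_def
proof (intro allI)
  fix y z
  have "R z (R y one) = R (R z y) (R (L y z) one)"
    using assms comps[of one y z] unfolding is_solution_def by (metis prod.inject)
  then have "iv (R z (R y one)) = iv (R (R z y) (R (L y z) one))" by simp
  then have "iv (y \<cdot> z) \<cdot> (one \<oplus> (y \<oplus> L y z)) = iv (L y z \<cdot> R z y) \<cdot> (one \<oplus> (L y z \<oplus> L (L y z) (R z y)))"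
    unfolding K ivone .
  then have "one \<oplus> (y \<oplus> L y z) = one \<oplus> (L y z \<oplus> L (L y z) (R z y))"
    unfolding prodLR by (rule lcancel)
  then show "(one \<oplus> y) \<oplus> L y z = L y z \<oplus> L (L y z) (iv (L y z) \<cdot> (y \<cdot> z))"
    by (metis padd F4 Rw)
qed

lemma sol_of_C:
  assumes Ccond
  shows "is_solution (assoc_map add mult one)"
  unfolding is_solution_def
proof (rule ext, clarify)
  fix x y z
  have C': "X \<oplus> (y \<oplus> L y z) = X \<oplus> (L y z \<oplus> L (L y z) (R z y))" for X y z
  proof -
    have "X \<oplus> (y \<oplus> L y z) = X \<oplus> (one \<oplus> (y \<oplus> L y z))" by (simp add: F1)
    also have "\<dots> = X \<oplus> (L y z \<oplus> L (L y z) (R z y))"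
      using assms unfolding Ccond_def by (metis padd Rw)
    finally show ?thesis .
  qed
  have t3: "R z (R y x) = R (R z y) (R (L y z) x)"
  proof -
    have "iv (R z (R y x)) = iv (R (R z y) (R (L y z) x))"
      unfolding K prodLR using C' by simp
    then show ?thesis by (metis iviv)
  qed
  have t1: "L (L x y) (L (R y x) z) = L x (L y z)"
    by (metis L_mult prodLR)
  have p1: "L (L x y) (L (R y x) z) \<cdot> (R (L (R y x) z) (L x y) \<cdot> R z (R y x)) = x \<cdot> (y \<cdot> z)"
    by (metis prodLR massoc)
  have p2: "L x (L y z) \<cdot> (L (R (L y z) x) (R z y) \<cdot> R (R z y) (R (L y z) x)) = x \<cdot> (y \<cdot> z)"
    by (metis prodLR massoc)
  have t2: "R (L (R y x) z) (L x y) = L (R (L y z) x) (R z y)"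
  proof -
    have "R (L (R y x) z) (L x y) \<cdot> R z (R y x) = L (R (L y z) x) (R z y) \<cdot> R z (R y x)"
      using p1 p2 t1 t3 by (metis lcancel)
    then show ?thesis by (metis massoc rinv rid)
  qed
  show "(r12 (assoc_map add mult one) \<circ> r23 (assoc_map add mult one) \<circ> r12 (assoc_map add mult one)) (x, y, z) =
        (r23 (assoc_map add mult one) \<circ> r12 (assoc_map add mult one) \<circ> r23 (assoc_map add mult one)) (x, y, z)"
    unfolding comps using t1 t2 t3 by simp
qed

lemma I3:
  assumes Ccond
  shows "one \<oplus> (y \<cdot> (one \<oplus> z)) = one \<oplus> (y \<cdot> z)"
  using I3_of_C assms unfolding Ccond_def by blast

end

theorem theorem43:
  fixes addS multS :: "'a \<Rightarrow> 'a \<Rightarrow> 'a" and oneS :: 'a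
    and addT multT :: "'b \<Rightarrow> 'b \<Rightarrow> 'b" and oneT :: 'b
    and \<sigma> :: "'b \<Rightarrow> 'a \<Rightarrow> 'a" and \<delta> :: "'a \<Rightarrow> 'b \<Rightarrow> 'b"
  assumes S: "left_semi_brace addS multS oneS"
    and T: "left_semi_brace addT multT oneT"
    and solS: "is_solution (assoc_map addS multS oneS)"
    and solT: "is_solution (assoc_map addT multT oneT)"
    and \<sigma>_aut: "\<forall>u. bij (\<sigma> u) \<and> (\<forall>a b. \<sigma> u (addS a b) = addS (\<sigma> u a) (\<sigma> u b))
                        \<and> (\<forall>a b. \<sigma> u (multS a b) = multS (\<sigma> u a) (\<sigma> u b))"
    and \<sigma>_hom: "\<forall>u v. \<sigma> (multT u v) = \<sigma> u \<circ> \<sigma> v"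
    and \<delta>_end: "\<forall>a u v. \<delta> a (addT u v) = addT (\<delta> a u) (\<delta> a v)"
    and \<delta>_antihom: "\<forall>a b u. \<delta> (addS a b) u = \<delta> b (\<delta> a u)"
    and compat: "\<forall>a b u v w.
        addT (\<delta> (lam addS multS oneS a (\<sigma> u b)) (multT u v))
             (multT u (addT (\<delta> b (ginv multT oneT u)) w))
        = multT u (addT (\<delta> b v) w)"
    and cond1: "\<forall>a u. \<delta> a (\<delta> oneS u) = \<delta> a u"
    and cond2: "\<forall>a u. addT (\<delta> a oneT) u = addT oneT u"
  shows "is_solution (assoc_map (dsp_add addS addT \<delta>) (dsp_mult multS multT \<sigma>) (oneS, oneT))"
proof -
  interpret S: lsb addS multS oneS by (rule lsb.intro) (rule S)
  interpret T: lsb addT multT oneT by (rule lsb.intro) (rule T)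
  have CS: S.Ccond by (rule S.C_of_sol[OF solS])
  have CT: T.Ccond by (rule T.C_of_sol[OF solT])
  have I3T: "addT oneT (multT y (addT oneT z)) = addT oneT (multT y z)" for y z
    by (rule T.I3[OF CT])
  have sadd: "\<sigma> u (addS a b) = addS (\<sigma> u a) (\<sigma> u b)" for u a b using \<sigma>_aut by blast
  have smult: "\<sigma> u (multS a b) = multS (\<sigma> u a) (\<sigma> u b)" for u a b using \<sigma>_aut by blast
  have sinj: "inj (\<sigma> u)" for u using \<sigma>_aut bij_is_inj by blast
  have scomp: "\<sigma> (multT u v) x = \<sigma> u (\<sigma> v x)" for u v x using \<sigma>_hom by simp
  have s1: "\<sigma> oneT x = x" for x
  proof -
    have "\<sigma> oneT (\<sigma> oneT x) = \<sigma> oneT x" using scomp[of oneT oneT x] by (simp add: T.lid)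
    then show ?thesis using sinj[of oneT] by (simp add: inj_eq)
  qed
  have sone: "\<sigma> u oneS = oneS" for u
  proof -
    have "\<sigma> u oneS = multS (\<sigma> u oneS) (\<sigma> u oneS)" using smult[of u oneS oneS] by (simp add: S.lid)
    then have "multS (\<sigma> u oneS) oneS = multS (\<sigma> u oneS) (\<sigma> u oneS)" by (simp add: S.rid)
    then show ?thesis using S.lcancel by metis
  qed
  have sinv: "\<sigma> u (ginv multS oneS a) = ginv multS oneS (\<sigma> u a)" for u a
  proof -
    have "multS (\<sigma> u a) (\<sigma> u (ginv multS oneS a)) = oneS"
      using smult[of u a "ginv multS oneS a"] by (simp add: S.rinv sone)
    then show ?thesis using S.ivuniq by metis
  qed
  have scancel: "\<sigma> u (\<sigma> (ginv multT oneT u) x) = x" for u x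
    using scomp[of u "ginv multT oneT u" x] by (simp add: T.rinv s1)
  have scancel2: "\<sigma> (ginv multT oneT u) (\<sigma> u x) = x" for u x
    using scomp[of "ginv multT oneT u" u x] by (simp add: T.linv s1)
  have dadd: "\<delta> a (addT u v) = addT (\<delta> a u) (\<delta> a v)" for a u v using \<delta>_end by blast
  have danti: "\<delta> (addS a b) u = \<delta> b (\<delta> a u)" for a b u using \<delta>_antihom by blast
  have cmp: "addT (\<delta> (lam addS multS oneS a (\<sigma> u b)) (multT u v))
             (multT u (addT (\<delta> b (ginv multT oneT u)) w))
        = multT u (addT (\<delta> b v) w)" for a b u v w using compat by blast
  have c2: "addT (\<delta> a oneT) u = addT oneT u" for a u using cond2 by blast

  define addB where "addB = dsp_add addS addT \<delta>"
  define multB where "multB = dsp_mult multS multT \<sigma>"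
  have addB: "addB (a, u) (b, v) = (addS a b, addT (\<delta> b u) v)" for a u b v
    by (simp add: addB_def dsp_add_def)
  have multB: "multB (a, u) (b, v) = (multS a (\<sigma> u b), multT u v)" for a u b v
    by (simp add: multB_def dsp_mult_def)
  have massocB: "multB (multB x y) z = multB x (multB y z)" for x y z
    by (cases x, cases y, cases z) (simp add: multB smult scomp S.massoc T.massoc)
  have lidB: "multB (oneS, oneT) x = x" for x
    by (cases x) (simp add: multB s1 S.lid T.lid)
  have ridB: "multB x (oneS, oneT) = x" for x
    by (cases x) (simp add: multB sone S.rid T.rid)
  have invB1: "multB (a, u) (\<sigma> (ginv multT oneT u) (ginv multS oneS a), ginv multT oneT u) = (oneS, oneT)" for a u
    by (simp add: multB scancel S.rinv T.rinv)
  have invB2: "multB (\<sigma> (ginv multT oneT u) (ginv multS oneS a), ginv multT oneT u) (a, u) = (oneS, oneT)" for a u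
    by (simp add: multB smult[symmetric] S.linv T.linv sone)
  have grpB: "is_group multB (oneS, oneT)"
    unfolding is_group_def
  proof (intro conjI allI)
    fix x show "\<exists>y. multB x y = (oneS, oneT) \<and> multB y x = (oneS, oneT)"
      using invB1 invB2 by (cases x) blast
  qed (simp_all add: massocB lidB ridB)
  have ivB: "ginv multB (oneS, oneT) (a, u) = (\<sigma> (ginv multT oneT u) (ginv multS oneS a), ginv multT oneT u)" for a u
    by (rule ginv_unique[OF grpB invB1 invB2])
  have saddB: "is_semigroup addB"
    unfolding is_semigroup_def
    by (auto simp: addB S.padd T.padd danti dadd)
  have axB: "multB x (addB y z) = addB (multB x y) (multB x (addB (ginv multB (oneS, oneT) x) z))" for x y z
  proof -
    obtain a u where x: "x = (a, u)" by (cases x)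
    obtain b v where y: "y = (b, v)" by (cases y)
    obtain c w where z: "z = (c, w)" by (cases z)
    have 1: "multS a (\<sigma> u (addS (\<sigma> (ginv multT oneT u) (ginv multS oneS a)) c))
           = lam addS multS oneS a (\<sigma> u c)"
      by (simp add: sadd scancel S.Ldef)
    show ?thesis
      unfolding x y z ivB addB multB 1
      by (simp add: cmp sadd S.ax)
  qed
  have LSB: "left_semi_brace addB multB (oneS, oneT)"
    unfolding left_semi_brace_def using saddB grpB axB by blast
  interpret B: lsb addB multB "(oneS, oneT)" by (rule lsb.intro) (rule LSB)
  have lamB: "lam addB multB (oneS, oneT) (b, u) (c, v)
      = (lam addS multS oneS b (\<sigma> u c), multT u (addT (\<delta> c (ginv multT oneT u)) v))" for b u c v
    by (simp add: B.Ldef ivB addB multB sadd scancel S.Ldef)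
  have CB: B.Ccond
    unfolding B.Ccond_def
  proof (intro allI)
    fix Y Z :: "'a \<times> 'b"
    obtain b u where Y: "Y = (b, u)" by (cases Y)
    obtain c v where Z: "Z = (c, v)" by (cases Z)
    define p where "p = lam addS multS oneS b (\<sigma> u c)"
    define P where "P = multT u (addT (\<delta> c (ginv multT oneT u)) v)"
    define q where "q = multS (ginv multS oneS p) (multS b (\<sigma> u c))"
    define Q where "Q = multT (ginv multT oneT P) (multT u v)"
    define Rr where "Rr = multT P (addT (\<delta> (\<sigma> (ginv multT oneT P) q) (ginv multT oneT P)) Q)"
    have LYZ: "lam addB multB (oneS, oneT) Y Z = (p, P)"
      unfolding Y Z lamB p_def P_def ..
    have W: "multB (ginv multB (oneS, oneT) (p, P)) (multB Y Z) = (\<sigma> (ginv multT oneT P) q, Q)"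
      unfolding Y Z ivB multB q_def Q_def by (simp add: smult)
    have LVW: "lam addB multB (oneS, oneT) (p, P) (\<sigma> (ginv multT oneT P) q, Q) = (lam addS multS oneS p q, Rr)"
      unfolding lamB Rr_def by (simp add: scancel)
    have Scomp: "addS (addS oneS b) p = addS p (lam addS multS oneS p q)"
      using CS unfolding S.Ccond_def p_def q_def by blast
    have PE: "addT oneT P = P"
    proof -
      have "addT (\<delta> p (multT u (ginv multT oneT u))) P = P"
        using cmp[where a=b and b=c and u=u and v="ginv multT oneT u" and w=v] unfolding p_def P_def .
      then show ?thesis by (simp add: T.rinv c2)
    qed
    have lhs1: "addT (\<delta> p u) P = multT u (addT oneT v)"
      using cmp[where a=b and b=c and u=u and v=oneT and w=v] unfolding p_def[symmetric] P_def[symmetric] by (simp add: T.rid c2)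
    have LHS: "addT (\<delta> p (addT (\<delta> b oneT) u)) P = addT oneT (multT u v)"
    proof -
      have "addT (\<delta> p (addT (\<delta> b oneT) u)) P = addT (addT (\<delta> p oneT) (\<delta> p u)) P"
        by (simp add: c2 dadd)
      also have "\<dots> = addT oneT (addT (\<delta> p u) P)" by (simp add: T.padd c2)
      also have "\<dots> = addT oneT (multT u (addT oneT v))" by (simp add: lhs1)
      also have "\<dots> = addT oneT (multT u v)" by (rule I3T)
      finally show ?thesis .
    qed
    have RHS1: "addT (\<delta> (lam addS multS oneS p q) P) Rr = multT P (addT oneT Q)"
      using cmp[where a=p and b="\<sigma> (ginv multT oneT P) q" and u=P and v=oneT and w=Q] unfolding Rr_def
      by (simp add: scancel T.rid c2)
    have PQ: "multT P Q = multT u v" unfolding Q_def by (rule T.m2)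
    have RHS2: "multT P (addT oneT Q) = addT oneT (multT u v)"
    proof -
      have e1: "multT P (addT oneT Q) = addT P (lam addT multT oneT P Q)"
        using T.ax[of P oneT Q] by (simp add: T.rid)
      have "addT oneT (multT P (addT oneT Q)) = multT P (addT oneT Q)"
        unfolding e1 by (simp add: T.padd[symmetric] PE)
      then show ?thesis using I3T[of P Q] PQ by simp
    qed
    show "addB (addB (oneS, oneT) Y) (lam addB multB (oneS, oneT) Y Z) =
          addB (lam addB multB (oneS, oneT) Y Z)
            (lam addB multB (oneS, oneT) (lam addB multB (oneS, oneT) Y Z)
              (multB (ginv multB (oneS, oneT) (lam addB multB (oneS, oneT) Y Z)) (multB Y Z)))"
      unfolding LYZ W LVW unfolding Y
      by (simp add: addB Scomp LHS RHS1 RHS2)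
  qed
  have "is_solution (assoc_map addB multB (oneS, oneT))"
    by (rule B.sol_of_C[OF CB])
  then show ?thesis unfolding addB_def multB_def .
qed

end
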